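(* Let $Y,X_1,\dots,X_k$ be Boolean variables and let $\gamma$ be a probabilistic circuit of the form $(Y\wedge\alpha)\vee(\neg Y\wedge\beta)$, where the root OR gate has parameter $\theta_Y$ on the wire from $Y\wedge\alpha$ and $\theta_{\neg Y}$ on the wire from $\neg Y\wedge\beta$, and $\alpha,\beta$ are probabilistic circuits over $X_1,\dots,X_k$ that are structurally identical (the same circuit graph, differing only in their OR-wire parameters $\theta^\alpha_{(n,c)}$ and $\theta^\beta_{(n,c)}$), with all parameters strictly positive. Let $\vee\alpha$ denote the logistic circuit whose root is an OR gate with the single input $\alpha$ carrying parameter $\theta_{\mathit{root}}=\log(\theta_Y/\theta_{\neg Y})$, and in which every OR-gate wire $(n,c)$ of $\alpha$ carries parameter $\log(\theta^\alpha_{(n,c)}/\theta^\beta_{(n,c)})$. Then for every $\mathbf{x}\in\{0,1\}^k$ with $\Pr_\gamma(\mathbf{x})>0$, $\Pr_\gamma(Y=1\mid\mathbf{x})$ equals the probability $\Pr(Y=1\mid\mathbf{x})$ defined by the logistic circuit $\vee\alpha$.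
   Context: A logical circuit over Boolean variables is a rooted directed acyclic graph whose leaves are literals $X$ or $\neg X$ and whose inner nodes are AND gates or OR gates. AND gates are decomposable (inputs mention disjoint variable sets), OR gates are deterministic (for any complete assignment at most one input is satisfied) and smooth (all inputs of an OR gate mention the same variables). A probabilistic circuit is such a circuit with a nonnegative parameter on each input wire of each OR gate, the parameters on the inputs of each OR gate summing to $1$; for a complete assignment $\mathbf{x}$ it defines $\Pr_n(\mathbf{x})=[\mathbf{x}\models n]$ at a leaf, $\Pr_n(\mathbf{x})=\prod_i\Pr_{c_i}(\mathbf{x})$ at an AND gate with children $c_i$, and $\Pr_n(\mathbf{x})=\sum_i\Pr_{c_i}(\mathbf{x})\theta_i$ at an OR gate with inputs $(c_i,\theta_i)$; conditional probabilities are derived from the joint distribution at the root. A logistic circuit is a logical circuit with decomposable AND gates, deterministic OR gates, an OR root, and a real parameter on each OR-gate input wire. For binary $\mathbf{x}$, the flow $f(n,\mathbf{x},c)$ from child $c$ of OR gate $n$ is $1$ if $\mathbf{x}$ satisfies the sentence of $c$ and $0$ otherwise. Weight function: $g_n(\mathbf{x})=0$ at a leaf; $g_n(\mathbf{x})=\sum_i g_{c_i}(\mathbf{x})$ at an AND gate; $g_n(\mathbf{x})=\sum_i f(n,\mathbf{x},c_i)(g_{c_i}(\mathbf{x})+\theta_i)$ at an OR gate with inputs $(c_i,\theta_i)$; with root $r$, the logistic circuit defines $\Pr(Y=1\mid\mathbf{x})=1/(1+\exp(-g_r(\mathbf{x})))$. *)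

theory Defs
  imports Complex_Main
begin

text \<open>A circuit is represented by its tree unfolding; each OR-gate input wire carries
  a parameter of type 'p. Leaves: Lit v True is the literal X_v, Lit v False is
  the literal (not X_v).\<close>

datatype 'p circ = Lit nat bool | And "'p circ list" | Or "('p circ \<times> 'p) list"

type_synonym assignment = "nat \<Rightarrow> bool"

fun vars :: "'p circ \<Rightarrow> nat set" where
  "vars (Lit v b) = {v}"
| "vars (And cs) = (\<Union>c\<in>set cs. vars c)"
| "vars (Or cs) = (\<Union>p\<in>set cs. vars (fst p))"

fun sat :: "'p circ \<Rightarrow> assignment \<Rightarrow> bool" where
  "sat (Lit v b) x = (x v = b)"
| "sat (And cs) x = (\<forall>c\<in>set cs. sat c x)"
| "sat (Or cs) x = (\<exists>p\<in>set cs. sat (fst p) x)"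

fun decomp_determ :: "'p circ \<Rightarrow> bool" where
  "decomp_determ (Lit v b) = True"
| "decomp_determ (And cs) =
     ((\<forall>c\<in>set cs. decomp_determ c) \<and>
      (\<forall>i j. i < length cs \<longrightarrow> j < length cs \<longrightarrow> i \<noteq> j \<longrightarrow> vars (cs ! i) \<inter> vars (cs ! j) = {}))"
| "decomp_determ (Or cs) =
     ((\<forall>p\<in>set cs. decomp_determ (fst p)) \<and>
      (\<forall>x i j. i < length cs \<longrightarrow> j < length cs \<longrightarrow> sat (fst (cs ! i)) x \<longrightarrow> sat (fst (cs ! j)) x \<longrightarrow> i = j))"

fun smooth :: "'p circ \<Rightarrow> bool" where
  "smooth (Lit v b) = True"
| "smooth (And cs) = (\<forall>c\<in>set cs. smooth c)"
| "smooth (Or cs) = ((\<forall>p\<in>set cs. smooth (fst p)) \<and> (\<forall>p\<in>set cs. \<forall>q\<in>set cs. vars (fst p) = vars (fst q)))"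

fun pc_params :: "real circ \<Rightarrow> bool" where
  "pc_params (Lit v b) = True"
| "pc_params (And cs) = (\<forall>c\<in>set cs. pc_params c)"
| "pc_params (Or cs) = ((\<forall>p\<in>set cs. pc_params (fst p)) \<and> (\<forall>p\<in>set cs. snd p \<ge> 0)
                        \<and> sum_list (map snd cs) = 1)"

fun pos_params :: "real circ \<Rightarrow> bool" where
  "pos_params (Lit v b) = True"
| "pos_params (And cs) = (\<forall>c\<in>set cs. pos_params c)"
| "pos_params (Or cs) = ((\<forall>p\<in>set cs. pos_params (fst p)) \<and> (\<forall>p\<in>set cs. snd p > 0))"

definition is_pc :: "real circ \<Rightarrow> bool" where
  "is_pc c \<longleftrightarrow> decomp_determ c \<and> smooth c \<and> pc_params c"

fun pc_prob :: "real circ \<Rightarrow> assignment \<Rightarrow> real" where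
  "pc_prob (Lit v b) x = (if x v = b then 1 else 0)"
| "pc_prob (And cs) x = prod_list (map (\<lambda>c. pc_prob c x) cs)"
| "pc_prob (Or cs) x = sum_list (map (\<lambda>p. pc_prob (fst p) x * snd p) cs)"

text \<open>Weight function g of a logistic circuit (flow = satisfaction of the child).\<close>
fun lc_weight :: "real circ \<Rightarrow> assignment \<Rightarrow> real" where
  "lc_weight (Lit v b) x = 0"
| "lc_weight (And cs) x = sum_list (map (\<lambda>c. lc_weight c x) cs)"
| "lc_weight (Or cs) x =
     sum_list (map (\<lambda>p. (if sat (fst p) x then 1 else 0) * (lc_weight (fst p) x + snd p)) cs)"

definition lc_prob :: "real circ \<Rightarrow> assignment \<Rightarrow> real" where
  "lc_prob c x = 1 / (1 + exp (- lc_weight c x))"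

text \<open>Y is variable 0, X_1..X_k are variables 1..k.
  gamma = (Y and alpha) or (not Y and beta).\<close>
definition gamma :: "real \<Rightarrow> real \<Rightarrow> real circ \<Rightarrow> real circ \<Rightarrow> real circ" where
  "gamma tY tN \<alpha> \<beta> = Or [(And [Lit 0 True, \<alpha>], tY), (And [Lit 0 False, \<beta>], tN)]"

definition marg_Y :: "real circ \<Rightarrow> assignment \<Rightarrow> real" where
  "marg_Y g x = pc_prob g (x(0 := True)) + pc_prob g (x(0 := False))"

definition cond_Y1 :: "real circ \<Rightarrow> assignment \<Rightarrow> real" where
  "cond_Y1 g x = pc_prob g (x(0 := True)) / marg_Y g x"

end

theory Submission
  imports Defs
begin

lemma sat_map[simp]: "sat (map_circ f c) x = sat c x"
proof (induction c)
  case (Or xs)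
  have "\<forall>p\<in>set xs. sat (map_circ f (fst p)) x = sat (fst p) x"
    using Or.IH by (auto simp: prod_set_simps)
  then show ?case by (force simp: circ.map)
qed (auto simp: circ.map)

lemma vars_map[simp]: "vars (map_circ f c) = vars c"
  by (induction c) (auto simp: circ.map)

lemma prod_list_pos: "(\<forall>c\<in>set cs. (0::real) < f c) \<Longrightarrow> 0 < prod_list (map f cs)"
  by (induction cs) auto

lemma sum_list_pos: "(\<forall>c\<in>set cs. (0::real) \<le> f c) \<Longrightarrow> c \<in> set cs \<Longrightarrow> 0 < f c \<Longrightarrow> 0 < sum_list (map f cs)"
proof (induction cs)
  case (Cons a cs)
  have "0 \<le> sum_list (map f cs)" by (rule sum_list_nonneg) (use Cons in auto)
  then show ?case using Cons
    by (cases "c = a") (auto simp: add_pos_nonneg add_nonneg_pos)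
qed simp

lemma sum_list_zero: "(\<forall>c\<in>set cs. f c = (0::real)) \<Longrightarrow> sum_list (map f cs) = 0"
  by (induction cs) auto

lemma ln_prod_list: "(\<forall>c\<in>set cs. (0::real) < f c \<and> 0 < g c) \<Longrightarrow>
  ln (prod_list (map f cs) / prod_list (map g cs)) = sum_list (map (\<lambda>c. ln (f c / g c)) cs)"
proof (induction cs)
  case (Cons a cs)
  have p: "0 < prod_list (map f cs)" "0 < prod_list (map g cs)"
    using Cons.prems by (auto intro: prod_list_pos)
  have "ln (f a * prod_list (map f cs) / (g a * prod_list (map g cs)))
     = ln ((f a / g a) * (prod_list (map f cs) / prod_list (map g cs)))" by simp
  also have "\<dots> = ln (f a / g a) + ln (prod_list (map f cs) / prod_list (map g cs))"
    using Cons.prems p by (subst ln_mult) auto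
  finally show ?case using Cons by simp
qed simp

lemma sum_list_unique:
  assumes "i < length cs" "\<And>j. j < length cs \<Longrightarrow> j \<noteq> i \<Longrightarrow> f (cs ! j) = (0::real)"
  shows "sum_list (map f cs) = f (cs ! i)"
proof -
  have "sum_list (map f cs) = (\<Sum>j<length cs. f (cs ! j))"
    by (simp add: sum_list_sum_nth atLeast0LessThan)
  also have "\<dots> = f (cs ! i)"
    using assms by (subst sum.remove[of _ i]) (auto intro!: sum.neutral)
  finally show ?thesis .
qed

lemma pc_pos:
  "pos_params c \<Longrightarrow> (sat c x \<longrightarrow> pc_prob c x > 0) \<and> (\<not> sat c x \<longrightarrow> pc_prob c x = 0)"
proof (induction c)
  case (Lit v b) then show ?case by auto
next
  case (And cs)
  then show ?case
    by (auto intro!: prod_list_pos simp: prod_list_zero_iff) (metis image_eqI)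
next
  case (Or cs)
  show ?case
  proof (intro conjI impI)
    assume "sat (Or cs) x"
    then obtain p where p: "p \<in> set cs" "sat (fst p) x" by auto
    have nn: "\<forall>q\<in>set cs. 0 \<le> pc_prob (fst q) x * snd q"
    proof
      fix q assume q: "q \<in> set cs"
      then have "0 < snd q" "pc_prob (fst q) x \<ge> 0"
        using Or.prems Or.IH[of q "fst q"] by (auto simp: fsts.intros less_imp_le)
      then show "0 \<le> pc_prob (fst q) x * snd q" by simp
    qed
    have "0 < pc_prob (fst p) x * snd p"
      using p Or.prems Or.IH[of p "fst p"] by (auto simp: fsts.intros)
    then show "pc_prob (Or cs) x > 0"
      using sum_list_pos[OF nn p(1)] by simp
  next
    assume "\<not> sat (Or cs) x"
    then show "pc_prob (Or cs) x = 0"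
      using Or.prems Or.IH by (simp, intro sum_list_zero) (force simp: prod_set_simps)
  qed
qed

lemma ln_ratio:
  assumes "(0::real) < a" "0 < b" "0 < c" "0 < d"
  shows "ln ((a * c) / (b * d)) = ln (a / b) + ln (c / d)"
proof -
  have "(a * c) / (b * d) = (a / b) * (c / d)" by simp
  then show ?thesis using assms by (simp add: ln_mult ln_div)
qed

lemma key:
  fixes \<delta> :: "(real \<times> real) circ"
  shows "decomp_determ (map_circ fst \<delta>) \<Longrightarrow> pos_params (map_circ fst \<delta>) \<Longrightarrow>
    pos_params (map_circ snd \<delta>) \<Longrightarrow> sat \<delta> x \<Longrightarrow>
    ln (pc_prob (map_circ fst \<delta>) x / pc_prob (map_circ snd \<delta>) x)
      = lc_weight (map_circ (\<lambda>(a, b). ln (a / b)) \<delta>) x"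
proof (induction \<delta>)
  case (Lit v b) then show ?case by (simp add: circ.map)
next
  case (And cs)
  have pos: "\<forall>c\<in>set cs. 0 < pc_prob (map_circ fst c) x \<and> 0 < pc_prob (map_circ snd c) x"
  proof
    fix c assume c: "c \<in> set cs"
    then have "pos_params (map_circ fst c)" "pos_params (map_circ snd c)" "sat c x"
      using And.prems by (auto simp: circ.map)
    then show "0 < pc_prob (map_circ fst c) x \<and> 0 < pc_prob (map_circ snd c) x"
      using pc_pos by simp
  qed
  have "ln (pc_prob (map_circ fst (And cs)) x / pc_prob (map_circ snd (And cs)) x)
     = ln (prod_list (map (\<lambda>c. pc_prob (map_circ fst c) x) cs) / prod_list (map (\<lambda>c. pc_prob (map_circ snd c) x) cs))"
    by (simp add: circ.map o_def)
  also have "\<dots> = sum_list (map (\<lambda>c. ln (pc_prob (map_circ fst c) x / pc_prob (map_circ snd c) x)) cs)"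
    using pos by (rule ln_prod_list)
  also have "\<dots> = sum_list (map (\<lambda>c. lc_weight (map_circ (\<lambda>(a, b). ln (a / b)) c) x) cs)"
    using And.IH And.prems by (intro arg_cong[where f=sum_list] map_cong refl) (auto simp: circ.map)
  also have "\<dots> = lc_weight (map_circ (\<lambda>(a, b). ln (a / b)) (And cs)) x"
    by (simp add: circ.map o_def)
  finally show ?case .
next
  case (Or cs)
  obtain i where i: "i < length cs" "sat (fst (cs ! i)) x"
    using Or.prems(4) by (auto simp: in_set_conv_nth)
  have det: "j = i" if "j < length cs" "sat (fst (cs ! j)) x" for j
    using Or.prems(1) i that by (auto simp: circ.map)
  define c where "c = fst (cs ! i)"
  have ci: "cs ! i \<in> set cs" using i by simp
  have pp: "0 < fst (snd (cs ! i))" "0 < snd (snd (cs ! i))"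
    using Or.prems(2,3) ci by (auto simp: circ.map)
  have pa: "pos_params (map_circ fst c)" "pos_params (map_circ snd c)"
     "decomp_determ (map_circ fst c)"
    using Or.prems ci by (auto simp: circ.map c_def)
  have sc: "sat c x" using i c_def by simp
  have A: "pc_prob (map_circ fst (Or cs)) x = pc_prob (map_circ fst c) x * fst (snd (cs ! i))"
    apply (simp add: circ.map o_def c_def)
    apply (rule sum_list_unique[OF i(1)])
  proof -
    fix j assume j: "j < length cs" "j \<noteq> i"
    then have "\<not> sat (fst (cs ! j)) x" using det by blast
    moreover have "pos_params (map_circ fst (fst (cs ! j)))"
      using Or.prems(2) j(1) by (simp add: circ.map)
    ultimately show "pc_prob (map_circ fst (fst (cs ! j))) x * fst (snd (cs ! j)) = 0"
      using pc_pos by simp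
  qed
  have B: "pc_prob (map_circ snd (Or cs)) x = pc_prob (map_circ snd c) x * snd (snd (cs ! i))"
    apply (simp add: circ.map o_def c_def)
    apply (rule sum_list_unique[OF i(1)])
  proof -
    fix j assume j: "j < length cs" "j \<noteq> i"
    then have "\<not> sat (fst (cs ! j)) x" using det by blast
    moreover have "pos_params (map_circ snd (fst (cs ! j)))"
      using Or.prems(3) j(1) by (simp add: circ.map)
    ultimately show "pc_prob (map_circ snd (fst (cs ! j))) x * snd (snd (cs ! j)) = 0"
      using pc_pos by simp
  qed
  have W: "lc_weight (map_circ (\<lambda>(a, b). ln (a / b)) (Or cs)) x
     = lc_weight (map_circ (\<lambda>(a, b). ln (a / b)) c) x + ln (fst (snd (cs ! i)) / snd (snd (cs ! i)))"
    apply (simp add: circ.map o_def c_def)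
    apply (subst sum_list_unique[OF i(1)])
    subgoal for j using det[of j] by (cases "sat (fst (cs ! j)) x") auto
    using i(2) by (simp add: case_prod_beta)
  have IH: "ln (pc_prob (map_circ fst c) x / pc_prob (map_circ snd c) x)
      = lc_weight (map_circ (\<lambda>(a, b). ln (a / b)) c) x"
  proof -
    have "c \<in> Basic_BNFs.fsts (cs ! i)" unfolding c_def by (cases "cs ! i") simp
    then show ?thesis using Or.IH[OF ci, of c] pa sc by blast
  qed
  show ?case
    unfolding A B W IH[symmetric]
    using pc_pos[OF pa(1)] pc_pos[OF pa(2)] sc pp by (intro ln_ratio) auto
qed

lemma agree:
  "\<forall>v\<in>vars c. x v = y v \<Longrightarrow> sat c x = sat c y \<and> pc_prob c x = pc_prob c y"
proof (induction c)
  case (Lit v b) then show ?case by simp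
next
  case (And cs)
  then have "\<forall>c\<in>set cs. sat c x = sat c y \<and> pc_prob c x = pc_prob c y" by auto
  then show ?case by (simp cong: map_cong)
next
  case (Or cs)
  have "\<forall>p\<in>set cs. sat (fst p) x = sat (fst p) y \<and> pc_prob (fst p) x = pc_prob (fst p) y"
  proof
    fix p assume p: "p \<in> set cs"
    have "fst p \<in> Basic_BNFs.fsts p" by (cases p) simp
    then show "sat (fst p) x = sat (fst p) y \<and> pc_prob (fst p) x = pc_prob (fst p) y"
      using Or.IH[OF p] Or.prems p by auto
  qed
  then show ?case by (simp cong: map_cong)
qed

lemma final_alg:
  fixes a b tY tN :: real
  assumes "0 < a" "0 < b" "0 < tY" "0 < tN"
  shows "a * tY / (a * tY + b * tN) = 1 / (1 + exp (- (ln (a / b) + ln (tY / tN))))"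
proof -
  have "exp (- (ln (a / b) + ln (tY / tN))) = (b * tN) / (a * tY)"
  proof -
    have "- (ln (a / b) + ln (tY / tN)) = ln ((b * tN) / (a * tY))"
      using assms by (simp add: ln_div ln_mult)
    then show ?thesis using assms by simp
  qed
  then have "1 / (1 + exp (- (ln (a / b) + ln (tY / tN)))) = 1 / (1 + (b * tN) / (a * tY))"
    by simp
  also have "\<dots> = a * tY / (a * tY + b * tN)"
    using assms by (simp add: field_simps)
  finally show ?thesis by simp
qed

theorem proposition4:
  fixes \<delta> :: "(real \<times> real) circ" and \<theta>Y \<theta>N :: real and k :: nat and x :: assignment
  defines "\<alpha> \<equiv> map_circ fst \<delta>" and "\<beta> \<equiv> map_circ snd \<delta>"
  assumes "vars \<delta> \<subseteq> {1..k}"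
    and "is_pc \<alpha>" and "is_pc \<beta>" and "pos_params \<alpha>" and "pos_params \<beta>"
    and "\<theta>Y > 0" and "\<theta>N > 0"
    and "is_pc (gamma \<theta>Y \<theta>N \<alpha> \<beta>)"
    and "marg_Y (gamma \<theta>Y \<theta>N \<alpha> \<beta>) x > 0"
  shows "cond_Y1 (gamma \<theta>Y \<theta>N \<alpha> \<beta>) x =
         lc_prob (Or [(map_circ (\<lambda>(a, b). ln (a / b)) \<delta>, ln (\<theta>Y / \<theta>N))]) x"
proof -
  have n0: "0 \<notin> vars \<delta>" using assms(3) by auto
  have ag: "pc_prob \<alpha> (x(0 := b)) = pc_prob \<alpha> x" "pc_prob \<beta> (x(0 := b)) = pc_prob \<beta> x" for b
    using agree[of \<alpha> "x(0 := b)" x] agree[of \<beta> "x(0 := b)" x] n0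
    unfolding \<alpha>_def \<beta>_def by auto
  have T: "pc_prob (gamma \<theta>Y \<theta>N \<alpha> \<beta>) (x(0 := True)) = pc_prob \<alpha> x * \<theta>Y"
    by (simp add: gamma_def ag)
  have F: "pc_prob (gamma \<theta>Y \<theta>N \<alpha> \<beta>) (x(0 := False)) = pc_prob \<beta> x * \<theta>N"
    by (simp add: gamma_def ag)
  have M: "marg_Y (gamma \<theta>Y \<theta>N \<alpha> \<beta>) x = pc_prob \<alpha> x * \<theta>Y + pc_prob \<beta> x * \<theta>N"
    unfolding marg_Y_def T F ..
  have sat: "sat \<delta> x"
  proof (rule ccontr)
    assume "\<not> sat \<delta> x"
    then have "pc_prob \<alpha> x = 0" "pc_prob \<beta> x = 0"
      using pc_pos[OF assms(6), of x] pc_pos[OF assms(7), of x] unfolding \<alpha>_def \<beta>_def by auto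
    then show False using assms(11) M by simp
  qed
  have pa: "0 < pc_prob \<alpha> x" "0 < pc_prob \<beta> x"
    using pc_pos[OF assms(6), of x] pc_pos[OF assms(7), of x] sat unfolding \<alpha>_def \<beta>_def by auto
  have dd: "decomp_determ \<alpha>" using assms(4) by (simp add: is_pc_def)
  have K: "ln (pc_prob \<alpha> x / pc_prob \<beta> x) = lc_weight (map_circ (\<lambda>(a, b). ln (a / b)) \<delta>) x"
    using key[of \<delta> x] dd assms(6,7) sat unfolding \<alpha>_def \<beta>_def by blast
  have "lc_prob (Or [(map_circ (\<lambda>(a, b). ln (a / b)) \<delta>, ln (\<theta>Y / \<theta>N))]) x
     = 1 / (1 + exp (- (ln (pc_prob \<alpha> x / pc_prob \<beta> x) + ln (\<theta>Y / \<theta>N))))"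
    unfolding lc_prob_def K using sat by simp
  also have "\<dots> = pc_prob \<alpha> x * \<theta>Y / (pc_prob \<alpha> x * \<theta>Y + pc_prob \<beta> x * \<theta>N)"
    using final_alg[OF pa assms(8,9)] by simp
  finally show ?thesis unfolding cond_Y1_def T M by simp
qed

end
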